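(* Under the standing setup below, the paths $p_1$ and $p_2$ are induced paths of $G$ (no two vertices of $p_i$ that are non-consecutive on $p_i$ are adjacent in $G$).
   Context: A biconnected graph is series-parallel if it contains no subdivision of $K_4$. A separation pair of a biconnected graph $G$ is a pair $(s,t)$ with $G-s-t$ disconnected; a transitive edge is an edge joining the two vertices of a separation pair. A component w.r.t. $(s,t)$ is the subgraph induced by $s$, $t$ and the vertex set of one connected component of $G-s-t$; vertices other than $s,t$ are internal. A component is heavy if it has an internal vertex adjacent to neither $s$ nor $t$. Standing setup: $G$ is a biconnected series-parallel graph without transitive edges such that every separation pair has at most two heavy components, and $G$ has at least one separation pair. $(s,t)$ is a separation pair of $G$ whose number $k$ of heavy components is maximum over all separation pairs. $G_1$ and $G_2$ are two distinct components w.r.t. $(s,t)$, chosen so that $G_1$ is heavy if $k\ge 1$ and $G_2$ is heavy if $k=2$. For $i\in\{1,2\}$, $p_i$ is a longest $s$–$t$ path in $G_i$. *)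

theory Defs
  imports Main
begin

definition graph :: "'a set \<Rightarrow> ('a \<Rightarrow> 'a \<Rightarrow> bool) \<Rightarrow> bool" where
  "graph V E \<longleftrightarrow> finite V \<and> (\<forall>x y. E x y \<longrightarrow> x \<in> V \<and> y \<in> V \<and> x \<noteq> y \<and> E y x)"

definition reach :: "('a \<Rightarrow> 'a \<Rightarrow> bool) \<Rightarrow> 'a set \<Rightarrow> 'a \<Rightarrow> 'a \<Rightarrow> bool" where
  "reach E X x y \<longleftrightarrow> (\<lambda>u v. E u v \<and> u \<in> X \<and> v \<in> X)\<^sup>*\<^sup>* x y"

definition connected_on :: "('a \<Rightarrow> 'a \<Rightarrow> bool) \<Rightarrow> 'a set \<Rightarrow> bool" where
  "connected_on E X \<longleftrightarrow> (\<forall>x\<in>X. \<forall>y\<in>X. reach E X x y)"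

definition biconnected :: "'a set \<Rightarrow> ('a \<Rightarrow> 'a \<Rightarrow> bool) \<Rightarrow> bool" where
  "biconnected V E \<longleftrightarrow> card V \<ge> 3 \<and> connected_on E V \<and> (\<forall>v\<in>V. connected_on E (V - {v}))"

definition is_path :: "('a \<Rightarrow> 'a \<Rightarrow> bool) \<Rightarrow> 'a set \<Rightarrow> 'a list \<Rightarrow> 'a \<Rightarrow> 'a \<Rightarrow> bool" where
  "is_path E X p a b \<longleftrightarrow> p \<noteq> [] \<and> distinct p \<and> set p \<subseteq> X \<and> hd p = a \<and> last p = b \<and>
     (\<forall>i. Suc i < length p \<longrightarrow> E (p ! i) (p ! Suc i))"

definition longest_path :: "('a \<Rightarrow> 'a \<Rightarrow> bool) \<Rightarrow> 'a set \<Rightarrow> 'a list \<Rightarrow> 'a \<Rightarrow> 'a \<Rightarrow> bool" where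
  "longest_path E X p a b \<longleftrightarrow> is_path E X p a b \<and> (\<forall>q. is_path E X q a b \<longrightarrow> length q \<le> length p)"

definition has_K4_subdivision :: "'a set \<Rightarrow> ('a \<Rightarrow> 'a \<Rightarrow> bool) \<Rightarrow> bool" where
  "has_K4_subdivision V E \<longleftrightarrow> (\<exists>(b :: nat \<Rightarrow> 'a) (P :: nat \<Rightarrow> nat \<Rightarrow> 'a list).
     inj_on b {0..<4} \<and>
     (\<forall>i j. i < j \<and> j < 4 \<longrightarrow> is_path E V (P i j) (b i) (b j)) \<and>
     (\<forall>i j. i < j \<and> j < 4 \<longrightarrow> (set (P i j) - {b i, b j}) \<inter> b ` {0..<4} = {}) \<and>
     (\<forall>i j k l. i < j \<and> j < 4 \<and> k < l \<and> l < 4 \<and> (i, j) \<noteq> (k, l) \<longrightarrow>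
        (set (P i j) - {b i, b j}) \<inter> (set (P k l) - {b k, b l}) = {}))"

definition series_parallel :: "'a set \<Rightarrow> ('a \<Rightarrow> 'a \<Rightarrow> bool) \<Rightarrow> bool" where
  "series_parallel V E \<longleftrightarrow> biconnected V E \<and> \<not> has_K4_subdivision V E"

definition sep_pair :: "'a set \<Rightarrow> ('a \<Rightarrow> 'a \<Rightarrow> bool) \<Rightarrow> 'a \<Rightarrow> 'a \<Rightarrow> bool" where
  "sep_pair V E s t \<longleftrightarrow> s \<in> V \<and> t \<in> V \<and> s \<noteq> t \<and> \<not> connected_on E (V - {s, t})"

text \<open>Components w.r.t. (s,t), represented by their sets of internal vertices
  (the connected components of G - s - t); the component itself is the subgraph
  induced by C \<union> {s,t}.\<close>
definition comps :: "'a set \<Rightarrow> ('a \<Rightarrow> 'a \<Rightarrow> bool) \<Rightarrow> 'a \<Rightarrow> 'a \<Rightarrow> 'a set set" where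
  "comps V E s t = {{y \<in> V - {s, t}. reach E (V - {s, t}) x y} | x. x \<in> V - {s, t}}"

definition heavy :: "('a \<Rightarrow> 'a \<Rightarrow> bool) \<Rightarrow> 'a \<Rightarrow> 'a \<Rightarrow> 'a set \<Rightarrow> bool" where
  "heavy E s t C \<longleftrightarrow> (\<exists>v\<in>C. \<not> E v s \<and> \<not> E v t)"

definition num_heavy :: "'a set \<Rightarrow> ('a \<Rightarrow> 'a \<Rightarrow> bool) \<Rightarrow> 'a \<Rightarrow> 'a \<Rightarrow> nat" where
  "num_heavy V E s t = card {C \<in> comps V E s t. heavy E s t C}"

definition induced_path :: "('a \<Rightarrow> 'a \<Rightarrow> bool) \<Rightarrow> 'a list \<Rightarrow> bool" where
  "induced_path E p \<longleftrightarrow> (\<forall>i j. Suc i < j \<and> j < length p \<longrightarrow> \<not> E (p ! i) (p ! j))"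

end

theory Submission
  imports Defs
begin


lemma is_path_succ: "is_path E X p a b \<longleftrightarrow> p \<noteq> [] \<and> distinct p \<and> set p \<subseteq> X \<and> hd p = a \<and> last p = b \<and> successively E p"
  unfolding is_path_def successively_conv_nth by blast

lemma graph_sym: "graph V E \<Longrightarrow> E x y \<Longrightarrow> E y x"
  unfolding graph_def by blast

lemma graph_V: "graph V E \<Longrightarrow> E x y \<Longrightarrow> x \<in> V \<and> y \<in> V"
  unfolding graph_def by blast

lemma reach_sym: assumes "graph V E" "reach E X a b" shows "reach E X b a"
proof -
  have "(\<lambda>u v. E u v \<and> u \<in> X \<and> v \<in> X)\<^sup>*\<^sup>* a b" using assms(2) unfolding reach_def .
  then show ?thesis unfolding reach_def
  proof induction
    case base then show ?case by simp
  next
    case (step y z)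
    have "E z y" using step(2) graph_sym[OF assms(1)] by blast
    then have "(\<lambda>u v. E u v \<and> u \<in> X \<and> v \<in> X)\<^sup>*\<^sup>* z y" using step(2) by auto
    then show ?case using step(3) by (meson rtranclp_trans)
  qed
qed

lemma reach_trans: "reach E X a b \<Longrightarrow> reach E X b c \<Longrightarrow> reach E X a c"
  unfolding reach_def by (meson rtranclp_trans)

lemma reach_step: "reach E X a b \<Longrightarrow> E b c \<Longrightarrow> b \<in> X \<Longrightarrow> c \<in> X \<Longrightarrow> reach E X a c"
  unfolding reach_def by (simp add: rtranclp.rtrancl_into_rtrancl)

lemma reach_refl: "reach E X a a" unfolding reach_def by simp

lemma reach_walk: assumes "reach E X a b" "a \<in> X"
  shows "\<exists>w. w \<noteq> [] \<and> hd w = a \<and> last w = b \<and> successively E w \<and> set w \<subseteq> X"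
proof -
  have "(\<lambda>u v. E u v \<and> u \<in> X \<and> v \<in> X)\<^sup>*\<^sup>* a b" using assms(1) unfolding reach_def .
  then show ?thesis
  proof induction
    case base then show ?case using assms(2) by (intro exI[of _ "[a]"]) auto
  next
    case (step y z)
    then obtain w where w: "w \<noteq> [] \<and> hd w = a \<and> last w = y \<and> successively E w \<and> set w \<subseteq> X" by blast
    then show ?case using step(2)
      by (intro exI[of _ "w @ [z]"]) (auto simp: successively_append_iff)
  qed
qed

lemma walk_path: "w \<noteq> [] \<Longrightarrow> successively E w \<Longrightarrow>
  \<exists>p. p \<noteq> [] \<and> distinct p \<and> hd p = hd w \<and> last p = last w \<and> successively E p \<and> set p \<subseteq> set w"
proof (induction "length w" arbitrary: w rule: less_induct)
  case less
  show ?case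
  proof (cases "distinct w")
    case True then show ?thesis using less by blast
  next
    case False
    then obtain A z B C where d: "w = A @ [z] @ B @ [z] @ C" using not_distinct_decomp by blast
    let ?w = "A @ z # C"
    have "successively E ?w" using less(3) unfolding d
      by (auto simp: successively_append_iff successively_Cons split: list.splits)
    moreover have "length ?w < length w" using d by simp
    moreover have "hd ?w = hd w" using d by (cases A) auto
    moreover have "last ?w = last w" using d by (cases C) auto
    moreover have "set ?w \<subseteq> set w" using d by auto
    ultimately show ?thesis using less(1)[of ?w] by fastforce
  qed
qed

lemma reach_path: assumes "reach E X a b" "a \<in> X"
  shows "\<exists>p. is_path E X p a b"
  using reach_walk[OF assms] walk_path unfolding is_path_succ by fastforce

lemma cross_edge: assumes "reach E X a b" "a \<in> A" "b \<notin> A"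
  shows "\<exists>z w. z \<in> A \<and> w \<notin> A \<and> E z w \<and> z \<in> X \<and> w \<in> X"
proof -
  have "(\<lambda>u v. E u v \<and> u \<in> X \<and> v \<in> X)\<^sup>*\<^sup>* a b" using assms(1) unfolding reach_def .
  then show ?thesis using assms(3)
  proof induction
    case base then show ?case using assms(2) by simp
  next
    case (step y z)
    then show ?case by blast
  qed
qed



lemma pairs4: "(i::nat) < j \<Longrightarrow> j < 4 \<Longrightarrow> (i=0\<and>j=1) \<or> (i=0\<and>j=2) \<or> (i=0\<and>j=3) \<or> (i=1\<and>j=2) \<or> (i=1\<and>j=3) \<or> (i=2\<and>j=3)"
  by arith

lemma K4:
  assumes g: "graph V E"
    and c: "c = u # A @ x # B @ v # D @ y # F"
    and dc: "distinct c" and sc: "successively E c" and wr: "E (last c) u" and uv: "E u v"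
    and R: "is_path E V R x y" and Rc: "set R \<inter> set c \<subseteq> {x, y}" and cV: "set c \<subseteq> V"
  shows "has_K4_subdivision V E"
proof -
  define b where "b = (\<lambda>i::nat. if i = 0 then u else if i = 1 then x else if i = 2 then v else y)"
  define P where "P = (\<lambda>(i::nat) (j::nat). if i = 0 then (if j = 1 then u # A @ [x] else if j = 2 then [u,v] else u # rev F @ [y])
      else if i = 1 then (if j = 2 then x # B @ [v] else R) else v # D @ [y])"
  have s1: "successively E (u # A @ [x])" and s2: "successively E (x # B @ [v])"
    and s3: "successively E (v # D @ [y])" and s4: "successively E (y # F)"
    using sc unfolding c by (auto simp: successively_append_iff successively_Cons hd_append split: if_splits)
  have lc: "last (y # F) = last c" unfolding c by simp
  have s5: "successively E (u # rev F @ [y])"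
  proof -
    have "successively (\<lambda>a b. E b a) (y # F)" using s4 by (rule successively_mono) (auto intro: graph_sym[OF g])
    then have "successively E (rev (y # F))" by (simp only: successively_rev)
    moreover have "E u (last (y # F))" using wr lc graph_sym[OF g] by metis
    ultimately show ?thesis by (cases F rule: rev_cases) (auto simp: successively_Cons)
  qed
  have p01: "is_path E V (P 0 1) (b 0) (b 1)" using s1 dc cV unfolding P_def b_def is_path_succ c by auto
  have p02: "is_path E V (P 0 2) (b 0) (b 2)" using uv dc cV unfolding P_def b_def is_path_succ c by auto
  have p03: "is_path E V (P 0 3) (b 0) (b 3)" using s5 dc cV unfolding P_def b_def is_path_succ c by auto
  have p12: "is_path E V (P 1 2) (b 1) (b 2)" using s2 dc cV unfolding P_def b_def is_path_succ c by auto
  have p13: "is_path E V (P 1 3) (b 1) (b 3)" using R unfolding P_def b_def by auto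
  have p23: "is_path E V (P 2 3) (b 2) (b 3)" using s3 dc cV unfolding P_def b_def is_path_succ c by auto
  have bimg: "b ` {0..<4} = {u,x,v,y}"
  proof -
    have "{0..<4::nat} = {0,1,2,3}" by auto
    then show ?thesis unfolding b_def by auto
  qed
  have i01: "set (P 0 1) - {b 0, b 1} = set A" using dc unfolding P_def b_def c by auto
  have i02: "set (P 0 2) - {b 0, b 2} = {}" unfolding P_def b_def by auto
  have i03: "set (P 0 3) - {b 0, b 3} = set F" using dc unfolding P_def b_def c by auto
  have i12: "set (P 1 2) - {b 1, b 2} = set B" using dc unfolding P_def b_def c by auto
  have i13: "set (P 1 3) - {b 1, b 3} \<subseteq> - set c" using Rc unfolding P_def b_def by auto
  have i23: "set (P 2 3) - {b 2, b 3} = set D" using dc unfolding P_def b_def c by auto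
  have inj: "inj_on b {0..<4}"
  proof -
    have "{0..<4::nat} = {0,1,2,3}" by auto
    then show ?thesis using dc unfolding b_def c by auto
  qed
  have all: "\<forall>i j. i < j \<and> j < 4 \<longrightarrow> is_path E V (P i j) (b i) (b j)"
    using p01 p02 p03 p12 p13 p23 pairs4 by metis
  have cset: "set c = {u,x,v,y} \<union> set A \<union> set B \<union> set D \<union> set F" unfolding c by auto
  have ib: "\<forall>i j. i < j \<and> j < 4 \<longrightarrow> (set (P i j) - {b i, b j}) \<inter> b ` {0..<4} = {}"
  proof (intro allI impI)
    fix i j :: nat assume "i < j \<and> j < 4"
    then show "(set (P i j) - {b i, b j}) \<inter> b ` {0..<4} = {}"
      using pairs4[of i j] i01 i02 i03 i12 i13 i23 dc bimg cset unfolding c by auto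
  qed
  have dj: "\<forall>i j k l. i < j \<and> j < 4 \<and> k < l \<and> l < 4 \<and> (i, j) \<noteq> (k, l) \<longrightarrow>
        (set (P i j) - {b i, b j}) \<inter> (set (P k l) - {b k, b l}) = {}"
  proof (intro allI impI)
    fix i j k l :: nat assume h: "i < j \<and> j < 4 \<and> k < l \<and> l < 4 \<and> (i, j) \<noteq> (k, l)"
    have d: "distinct (A @ B @ D @ F)" using dc unfolding c by auto
    have sub: "set A \<union> set B \<union> set D \<union> set F \<subseteq> set c" unfolding c by auto
    show "(set (P i j) - {b i, b j}) \<inter> (set (P k l) - {b k, b l}) = {}"
      using pairs4[of i j] pairs4[of k l] h
    proof -
      have ij: "(i=0\<and>j=1) \<or> (i=0\<and>j=2) \<or> (i=0\<and>j=3) \<or> (i=1\<and>j=2) \<or> (i=1\<and>j=3) \<or> (i=2\<and>j=3)"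
        using pairs4[of i j] h by blast
      have kl: "(k=0\<and>l=1) \<or> (k=0\<and>l=2) \<or> (k=0\<and>l=3) \<or> (k=1\<and>l=2) \<or> (k=1\<and>l=3) \<or> (k=2\<and>l=3)"
        using pairs4[of k l] h by blast
      show ?thesis using ij kl h i01 i02 i03 i12 i13 i23 d sub
        by (elim disjE) auto
    qed
  qed
  show ?thesis unfolding has_K4_subdivision_def using inj all ib dj by blast
qed



lemma walk_st: "w \<noteq> [] \<Longrightarrow> successively E w \<Longrightarrow> hd w \<in> S \<Longrightarrow> last w \<in> T \<Longrightarrow> S \<inter> T = {} \<Longrightarrow>
  \<exists>R. R \<noteq> [] \<and> hd R \<in> S \<and> last R \<in> T \<and> successively E R \<and> set R \<subseteq> set w \<and> set R \<inter> (S \<union> T) \<subseteq> {hd R, last R}"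
proof (induction "length w" arbitrary: w rule: less_induct)
  case less
  obtain z w' where w: "w = z # w'" using less(2) by (cases w) auto
  have "w' \<noteq> []" using less(4-6) w by auto
  show ?case
  proof (cases "\<exists>e\<in>set w'. e \<in> S")
    case True
    then obtain M e N where d: "w' = M @ e # N" "e \<in> S" by (meson split_list)
    have "successively E (e # N)" using less(3) unfolding w d
      by (auto simp: successively_append_iff successively_Cons)
    moreover have "last (e # N) = last w" unfolding w d by simp
    moreover have "length (e # N) < length w" unfolding w d by simp
    ultimately obtain R where "R \<noteq> [] \<and> hd R \<in> S \<and> last R \<in> T \<and> successively E R \<and> set R \<subseteq> set (e # N) \<and> set R \<inter> (S \<union> T) \<subseteq> {hd R, last R}"
      using less(1)[of "e # N"] less(5,6) d(2) by fastforce
    then show ?thesis unfolding w d by (intro exI[of _ R]) auto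
  next
    case False
    have "\<exists>e\<in>set w'. e \<in> T" using \<open>w' \<noteq> []\<close> less(5) w by auto
    then obtain M e N where d: "w' = M @ e # N" "e \<in> T" "\<forall>y\<in>set M. y \<notin> T"
      using split_list_first_prop[of w' "\<lambda>y. y \<in> T"] by blast
    let ?R = "z # M @ [e]"
    have "successively E ?R" using less(3) unfolding w d
      by (auto simp: successively_append_iff successively_Cons hd_append split: if_splits)
    moreover have "set ?R \<inter> (S \<union> T) \<subseteq> {hd ?R, last ?R}" using False d unfolding w by auto
    ultimately show ?thesis using less(4) d(2) unfolding w d by (intro exI[of _ ?R]) auto
  qed
qed

lemma st_path: assumes "reach E W a b" "a \<in> W" "a \<in> S" "b \<in> T" "S \<inter> T = {}"
  shows "\<exists>R x y. x \<in> S \<and> y \<in> T \<and> is_path E W R x y \<and> set R \<inter> (S \<union> T) \<subseteq> {x, y}"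
proof -
  obtain w where w: "w \<noteq> [] \<and> hd w = a \<and> last w = b \<and> successively E w \<and> set w \<subseteq> W"
    using reach_walk[OF assms(1,2)] by blast
  then obtain R where R: "R \<noteq> [] \<and> hd R \<in> S \<and> last R \<in> T \<and> successively E R \<and> set R \<subseteq> set w \<and> set R \<inter> (S \<union> T) \<subseteq> {hd R, last R}"
    using walk_st[of w E S T] assms by auto
  then obtain p where p: "p \<noteq> [] \<and> distinct p \<and> hd p = hd R \<and> last p = last R \<and> successively E p \<and> set p \<subseteq> set R"
    using walk_path[of R E] by blast
  show ?thesis
    apply (rule exI[of _ p], rule exI[of _ "hd R"], rule exI[of _ "last R"])
    using p R w unfolding is_path_succ by auto
qed

lemma cyc_rot:
  assumes "distinct (L @ M)" "successively E (L @ M)" "E (last (L @ M)) (hd (L @ M))" "M \<noteq> []"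
  shows "distinct (M @ L) \<and> successively E (M @ L) \<and> E (last (M @ L)) (hd (M @ L))"
proof (cases "L = []")
  case True then show ?thesis using assms by simp
next
  case False
  then show ?thesis using assms by (auto simp: successively_append_iff)
qed



lemma comp_sub: "C \<in> comps V E s t \<Longrightarrow> C \<subseteq> V - {s,t}"
  unfolding comps_def by auto

lemma comp_closed: assumes "C \<in> comps V E s t" "a \<in> C" "b \<in> V - {s,t}" "E a b" shows "b \<in> C"
proof -
  obtain x where x: "C = {y \<in> V - {s, t}. reach E (V - {s, t}) x y}" using assms(1) unfolding comps_def by auto
  have "reach E (V - {s, t}) x a" "a \<in> V - {s,t}" using assms(2) x by auto
  then have "reach E (V - {s, t}) x b" using reach_step assms(3,4) by metis
  then show ?thesis using x assms(3) by blast
qed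

lemma comp_ne: "C \<in> comps V E s t \<Longrightarrow> \<exists>x. x \<in> C"
  unfolding comps_def using reach_refl by fastforce

lemma comp_reachW: assumes "graph V E" "C \<in> comps V E s t" "a \<in> C" "b \<in> C"
  shows "reach E (V - {s,t}) a b"
proof -
  obtain x where "C = {y \<in> V - {s, t}. reach E (V - {s, t}) x y}" using assms(2) unfolding comps_def by auto
  then have "reach E (V - {s, t}) x a" "reach E (V - {s, t}) x b" using assms(3,4) by auto
  then show ?thesis using reach_sym[OF assms(1)] reach_trans by metis
qed

lemma reach_restrict: assumes "reach E W a b" "a \<in> C" "\<And>z z'. z \<in> C \<Longrightarrow> z' \<in> W \<Longrightarrow> E z z' \<Longrightarrow> z' \<in> C"
  shows "reach E C a b \<and> b \<in> C"
proof -
  have "(\<lambda>u v. E u v \<and> u \<in> W \<and> v \<in> W)\<^sup>*\<^sup>* a b" using assms(1) unfolding reach_def .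
  then show ?thesis
  proof induction
    case base then show ?case using assms(2) reach_refl by fast
  next
    case (step y z)
    then have "z \<in> C" using assms(3) step(2) by blast
    then have "reach E C a z" using step(2,3) reach_step[of E C a y z] by blast
    then show ?case using \<open>z \<in> C\<close> by blast
  qed
qed

lemma comp_reach: assumes "graph V E" "C \<in> comps V E s t" "a \<in> C" "b \<in> C"
  shows "reach E C a b"
proof -
  have cl: "\<And>z z'. z \<in> C \<Longrightarrow> z' \<in> V - {s,t} \<Longrightarrow> E z z' \<Longrightarrow> z' \<in> C"
    using comp_closed[OF assms(2)] by blast
  show ?thesis using reach_restrict[OF comp_reachW[OF assms] assms(3) cl] by (rule conjunct1)
qed

lemma comp_disj: assumes "graph V E" "C1 \<in> comps V E s t" "C2 \<in> comps V E s t" "C1 \<noteq> C2"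
  shows "C1 \<inter> C2 = {}"
proof (rule ccontr)
  assume "C1 \<inter> C2 \<noteq> {}"
  then obtain z where z: "z \<in> C1" "z \<in> C2" by auto
  obtain x1 where x1: "C1 = {y \<in> V - {s, t}. reach E (V - {s, t}) x1 y}" using assms(2) unfolding comps_def by auto
  obtain x2 where x2: "C2 = {y \<in> V - {s, t}. reach E (V - {s, t}) x2 y}" using assms(3) unfolding comps_def by auto
  have "reach E (V - {s,t}) x1 z" "reach E (V - {s,t}) x2 z" using z x1 x2 by auto
  then have r1: "reach E (V - {s,t}) x1 x2" using reach_sym[OF assms(1), of "V - {s,t}" x2 z] reach_trans[of E "V - {s,t}" x1 z x2] by blast
  then have r: "reach E (V - {s,t}) x1 x2" "reach E (V - {s,t}) x2 x1" using reach_sym[OF assms(1)] by blast+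
  have "C1 \<subseteq> C2" unfolding x1 x2 using reach_trans[OF r(2)] by blast
  moreover have "C2 \<subseteq> C1" unfolding x1 x2 using reach_trans[OF r(1)] by blast
  ultimately have "C1 = C2" by blast
  then show False using assms(4) by simp
qed

lemma comps_swap: "comps V E s t = comps V E t s"
  unfolding comps_def by (simp add: insert_commute)

lemma comp_nbr: assumes g: "graph V E" and bc: "biconnected V E" and "s \<in> V" "t \<in> V" "s \<noteq> t"
  and C: "C \<in> comps V E s t"
  shows "\<exists>a\<in>C. E s a"
proof -
  obtain x0 where x0: "x0 \<in> C" using comp_ne[OF C] by blast
  have "connected_on E (V - {t})" using bc assms(4) unfolding biconnected_def by blast
  moreover have "x0 \<in> V - {t}" "s \<in> V - {t}" using comp_sub[OF C] x0 assms by auto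
  ultimately have "reach E (V - {t}) x0 s" unfolding connected_on_def by blast
  moreover have "s \<notin> C" using comp_sub[OF C] by auto
  ultimately obtain z w where zw: "z \<in> C" "w \<notin> C" "E z w" "w \<in> V - {t}"
    using cross_edge[of E "V - {t}" x0 s C] x0 by blast
  have "w = s" using comp_closed[OF C zw(1) _ zw(3)] zw by blast
  then show ?thesis using zw graph_sym[OF g] by blast
qed

lemma decomp: "Suc i < j \<Longrightarrow> j < length p \<Longrightarrow>
   p = take i p @ p!i # take (j - Suc i) (drop (Suc i) p) @ p!j # drop (Suc j) p"
proof -
  assume h: "Suc i < j" "j < length p"
  have 1: "p = take i p @ p!i # drop (Suc i) p" using h by (simp add: id_take_nth_drop)
  let ?q = "drop (Suc i) p"
  have "j - Suc i < length ?q" using h by simp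
  then have 2: "?q = take (j - Suc i) ?q @ ?q!(j - Suc i) # drop (Suc (j - Suc i)) ?q" by (rule id_take_nth_drop)
  have "?q!(j - Suc i) = p!j" using h by simp
  moreover have "drop (Suc (j - Suc i)) ?q = drop (Suc j) p" using h by simp
  ultimately show ?thesis using 1 2 by metis
qed



lemma main_induced:
  assumes g: "graph V E" and bc: "biconnected V E" and nk: "\<not> has_K4_subdivision V E"
    and nt: "\<forall>x y. sep_pair V E x y \<longrightarrow> \<not> E x y"
    and st: "s \<in> V" "t \<in> V" "s \<noteq> t"
    and C1: "C1 \<in> comps V E s t" and C2: "C2 \<in> comps V E s t" and C12: "C1 \<noteq> C2"
    and p: "is_path E (C1 \<union> {s, t}) p s t"
  shows "induced_path E p"
  unfolding induced_path_def
proof (intro allI impI notI)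
  fix i j assume ij: "Suc i < j \<and> j < length p" and ch: "E (p ! i) (p ! j)"
  define u where "u = p ! i"
  define v where "v = p ! j"
  define Pp where "Pp = take i p"
  define Q where "Q = take (j - Suc i) (drop (Suc i) p)"
  define T' where "T' = drop (Suc j) p"
  have pd: "p = Pp @ u # Q @ v # T'" unfolding Pp_def u_def Q_def v_def T'_def using decomp ij by blast
  have Qne: "Q \<noteq> []" unfolding Q_def using ij by simp
  have pp: "p \<noteq> [] \<and> distinct p \<and> set p \<subseteq> C1 \<union> {s,t} \<and> hd p = s \<and> last p = t \<and> successively E p"
    using p unfolding is_path_succ by blast
  obtain a where a: "a \<in> C2" "E s a" using comp_nbr[OF g bc st C2] by blast
  obtain b where b: "b \<in> C2" "E t b" using comp_nbr[OF g bc st(2,1) st(3)[symmetric]] C2 comps_swap by metis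
  obtain I2 where I2: "is_path E C2 I2 a b" using reach_path[OF comp_reach[OF g C2 a(1) b(1)] a(1)] by blast
  have i2: "I2 \<noteq> [] \<and> distinct I2 \<and> set I2 \<subseteq> C2 \<and> hd I2 = a \<and> last I2 = b \<and> successively E I2"
    using I2 unfolding is_path_succ by blast
  have dis: "C1 \<inter> C2 = {}" using comp_disj[OF g C1 C2 C12] .
  have stC2: "s \<notin> C2" "t \<notin> C2" using comp_sub[OF C2] by auto
  have C12V: "C1 \<subseteq> V" "C2 \<subseteq> V" using comp_sub[OF C1] comp_sub[OF C2] by auto
  define c0 where "c0 = p @ rev I2"
  have c0d: "distinct c0" unfolding c0_def using pp i2 dis stC2 by auto
  have srev: "successively E (rev I2)"
  proof -
    have "successively (\<lambda>x y. E y x) I2" using i2 by (auto intro: successively_mono graph_sym[OF g])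
    then show ?thesis by (simp only: successively_rev)
  qed
  have c0s: "successively E c0" unfolding c0_def using pp i2 srev b(2)
    by (auto simp: successively_append_iff hd_rev)
  have c0w: "E (last c0) (hd c0)" unfolding c0_def using pp i2 a(2) graph_sym[OF g]
    by (auto simp: last_rev)
  define Ou where "Ou = T' @ rev I2 @ Pp"
  have c0eq: "c0 = Pp @ (u # Q @ v # T' @ rev I2)" unfolding c0_def using pd by simp
  define c where "c = u # Q @ v # Ou"
  have ceq: "c = (u # Q @ v # T' @ rev I2) @ Pp" unfolding c_def Ou_def by simp
  have cc: "distinct c \<and> successively E c \<and> E (last c) (hd c)"
    unfolding ceq using cyc_rot[of Pp "u # Q @ v # T' @ rev I2" E] c0d c0s c0w c0eq by simp
  have cset: "set c = set c0" unfolding ceq c0eq by auto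
  have cV: "set c \<subseteq> V" unfolding cset c0_def using pp i2 C12V st by auto
  have uvV: "u \<in> V" "v \<in> V" using cV unfolding c_def by auto
  have uv: "u \<noteq> v" using cc unfolding c_def by auto
  have "\<not> sep_pair V E u v" using nt ch unfolding u_def v_def by blast
  then have conn: "connected_on E (V - {u, v})" using uvV uv unfolding sep_pair_def by blast
  have aO: "a \<in> set Ou" unfolding Ou_def using i2 by auto
  have x0: "hd Q \<in> set Q" using Qne by simp
  have W: "hd Q \<in> V - {u,v}" "a \<in> V - {u,v}" using cc cV x0 aO unfolding c_def by auto
  then have "reach E (V - {u,v}) (hd Q) a" using conn unfolding connected_on_def by blast
  moreover have "set Q \<inter> set Ou = {}" using cc unfolding c_def by auto
  ultimately obtain R x y where R: "x \<in> set Q" "y \<in> set Ou" "is_path E (V - {u,v}) R x y"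
    "set R \<inter> (set Q \<union> set Ou) \<subseteq> {x, y}"
    using st_path[of E "V - {u,v}" "hd Q" a "set Q" "set Ou"] W x0 aO by blast
  obtain A B where AB: "Q = A @ x # B" using R(1) by (meson split_list)
  obtain D F where DF: "Ou = D @ y # F" using R(2) by (meson split_list)
  have c2: "c = u # A @ x # B @ v # D @ y # F" unfolding c_def AB DF by simp
  have RV: "is_path E V R x y" using R(3) unfolding is_path_succ by auto
  have Ruv: "u \<notin> set R" "v \<notin> set R" using R(3) unfolding is_path_succ by auto
  have Rc: "set R \<inter> set c \<subseteq> {x, y}" using R(4) Ruv unfolding c_def by auto
  have "E (last c) u" using cc unfolding c_def by simp
  then have "has_K4_subdivision V E"
    using K4[OF g c2 _ _ _ ch[folded u_def v_def] RV Rc cV] cc by blast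
  then show False using nk by blast
qed


theorem claim1:
  fixes V :: "'a set" and E :: "'a \<Rightarrow> 'a \<Rightarrow> bool"
    and s t :: 'a and C1 C2 :: "'a set" and p1 p2 :: "'a list"
  assumes "graph V E"
    and "series_parallel V E"
    and "\<forall>x y. sep_pair V E x y \<longrightarrow> \<not> E x y"
    and "\<forall>x y. sep_pair V E x y \<longrightarrow> num_heavy V E x y \<le> 2"
    and "\<exists>x y. sep_pair V E x y"
    and "sep_pair V E s t"
    and "\<forall>x y. sep_pair V E x y \<longrightarrow> num_heavy V E x y \<le> num_heavy V E s t"
    and "C1 \<in> comps V E s t" and "C2 \<in> comps V E s t" and "C1 \<noteq> C2"
    and "num_heavy V E s t \<ge> 1 \<longrightarrow> heavy E s t C1"
    and "num_heavy V E s t = 2 \<longrightarrow> heavy E s t C2"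
    and "longest_path E (C1 \<union> {s, t}) p1 s t"
    and "longest_path E (C2 \<union> {s, t}) p2 s t"
  shows "induced_path E p1 \<and> induced_path E p2"
proof -
  have bc: "biconnected V E" and nk: "\<not> has_K4_subdivision V E"
    using assms(2) unfolding series_parallel_def by auto
  have st: "s \<in> V" "t \<in> V" "s \<noteq> t" using assms(6) unfolding sep_pair_def by auto
  have p1: "is_path E (C1 \<union> {s, t}) p1 s t" using assms(13) unfolding longest_path_def by blast
  have p2: "is_path E (C2 \<union> {s, t}) p2 s t" using assms(14) unfolding longest_path_def by blast
  show ?thesis
    using main_induced[OF assms(1) bc nk assms(3) st assms(8) assms(9) assms(10) p1]
      main_induced[OF assms(1) bc nk assms(3) st assms(9) assms(8) assms(10)[symmetric] p2] by blast
qed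

end
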